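(* If $m$ is a universal probability, then the map $\Sigma^*\ni s\mapsto m(s)I$ ($I$ the $N\times N$ identity) is a universal semi-POVM.
   Context: $N$ is a fixed positive integer; $\Sigma^*$ is the set of finite binary strings. $\mathrm{Her}(N)$ is the set of $N\times N$ Hermitian matrices and $\mathrm{Her}_Q(N)$ those with entries in $\{a+ib:a,b\in\mathbb{Q}\}$; $A\leqslant B$ means $B-A$ is positive semi-definite. A lower-computable semi-measure is a function $r:\Sigma^*\to[0,\infty)$ with $\sum_s r(s)\le 1$ such that there is a total recursive $f:\mathbb{N}\times\Sigma^*\to\mathbb{Q}$ with $\lim_{n}f(n,s)=r(s)$ and $f(n,s)\le f(n+1,s)$ for all $n,s$. A universal probability is a lower-computable semi-measure $m$ such that for every lower-computable semi-measure $r$ there is $c>0$ with $c\,r(s)\le m(s)$ for all $s$. A semi-POVM on $\Sigma^*$ is a map $R:\Sigma^*\to\mathrm{Her}(N)$ with $0\leqslant R(s)$ for all $s$ and $\sum_s R(s)\leqslant I$. A lower-computable semi-POVM is a semi-POVM $R$ for which there is a total recursive $f:\mathbb{N}\times\Sigma^*\to\mathrm{Her}_Q(N)$ with $\lim_{n}f(n,s)=R(s)$ and $f(n,s)\leqslant R(s)$ for all $n,s$. A universal semi-POVM is a lower-computable semi-POVM $M$ such that for every lower-computable semi-POVM $R$ there is $c>0$ with $c\,R(s)\leqslant M(s)$ for all $s\in\Sigma^*$. *)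

theory Defs
  imports "HOL-Analysis.Analysis" "HOL-Library.Nat_Bijection"
begin

datatype recf = RZero | RSucc | RProj nat | RComp recf "recf list"
  | RPrec recf recf | RMin recf

inductive eval_rf :: "recf \<Rightarrow> nat list \<Rightarrow> nat \<Rightarrow> bool" where
  ev_zero: "eval_rf RZero xs 0"
| ev_succ: "eval_rf RSucc (x # xs) (Suc x)"
| ev_proj: "i < length xs \<Longrightarrow> eval_rf (RProj i) xs (xs ! i)"
| ev_comp: "list_all2 (\<lambda>g y. eval_rf g xs y) gs ys \<Longrightarrow> eval_rf f ys z
             \<Longrightarrow> eval_rf (RComp f gs) xs z"
| ev_prec0: "eval_rf f xs y \<Longrightarrow> eval_rf (RPrec f g) (0 # xs) y"
| ev_precS: "eval_rf (RPrec f g) (n # xs) y \<Longrightarrow> eval_rf g (n # y # xs) z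
             \<Longrightarrow> eval_rf (RPrec f g) (Suc n # xs) z"
| ev_min: "eval_rf f (n # xs) 0 \<Longrightarrow> (\<forall>k<n. \<exists>y. y \<noteq> 0 \<and> eval_rf f (k # xs) y)
             \<Longrightarrow> eval_rf (RMin f) xs n"
monos list.rel_mono_strong

definition total_recursive :: "(nat \<Rightarrow> nat) \<Rightarrow> bool" where
  "total_recursive h \<longleftrightarrow> (\<exists>c. \<forall>x. eval_rf c [x] (h x))"

definition code_str :: "bool list \<Rightarrow> nat" where
  "code_str s = list_encode (map (\<lambda>b. if b then 1 else 0) s)"

definition rat_of_code :: "nat \<Rightarrow> rat" where
  "rat_of_code k = (case prod_decode k of (a, b) \<Rightarrow> Fract (int_decode a) (int b + 1))"

definition gauss_of_code :: "nat \<Rightarrow> complex" where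
  "gauss_of_code k = (case prod_decode k of (a, b) \<Rightarrow>
      Complex (real_of_rat (rat_of_code a)) (real_of_rat (rat_of_code b)))"

definition computable_rat_fun :: "(nat \<Rightarrow> bool list \<Rightarrow> rat) \<Rightarrow> bool" where
  "computable_rat_fun f \<longleftrightarrow> (\<exists>h. total_recursive h \<and>
      (\<forall>n s. rat_of_code (h (prod_encode (n, code_str s))) = f n s))"

text \<open>Matrix-valued: entries computed uniformly, row/column indices numbered 0..N-1
  via some bijection (computability does not depend on the chosen numbering).\<close>
definition computable_mat_fun :: "(nat \<Rightarrow> bool list \<Rightarrow> complex^'n::finite^'n) \<Rightarrow> bool" where
  "computable_mat_fun f \<longleftrightarrow> (\<exists>ix::'n \<Rightarrow> nat. bij_betw ix UNIV {..<CARD('n)} \<and>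
      (\<exists>h. total_recursive h \<and>
        (\<forall>n s i j. gauss_of_code (h (prod_encode (prod_encode (n, code_str s),
                                                prod_encode (ix i, ix j)))) = f n s $ i $ j)))"

definition lower_computable_semimeasure :: "(bool list \<Rightarrow> real) \<Rightarrow> bool" where
  "lower_computable_semimeasure r \<longleftrightarrow>
     (\<forall>s. 0 \<le> r s) \<and> r summable_on UNIV \<and> infsum r UNIV \<le> 1 \<and>
     (\<exists>f. computable_rat_fun f \<and>
          (\<forall>s. (\<lambda>n. real_of_rat (f n s)) \<longlonglongrightarrow> r s) \<and>
          (\<forall>n s. f n s \<le> f (Suc n) s))"

definition universal_probability :: "(bool list \<Rightarrow> real) \<Rightarrow> bool" where
  "universal_probability m \<longleftrightarrow> lower_computable_semimeasure m \<and>
     (\<forall>r. lower_computable_semimeasure r \<longrightarrow> (\<exists>c>0. \<forall>s. c * r s \<le> m s))"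

text \<open>N x N complex matrices are complex^'n^'n with N = CARD('n).\<close>
definition hermitian :: "complex^'n::finite^'n \<Rightarrow> bool" where
  "hermitian A \<longleftrightarrow> (\<forall>i j. A $ i $ j = cnj (A $ j $ i))"

definition psd :: "complex^'n::finite^'n \<Rightarrow> bool" where
  "psd A \<longleftrightarrow> hermitian A \<and>
     (\<forall>v::complex^'n. 0 \<le> Re (\<Sum>i\<in>UNIV. \<Sum>j\<in>UNIV. cnj (v $ i) * A $ i $ j * v $ j))"

definition loewner_le :: "complex^'n::finite^'n \<Rightarrow> complex^'n^'n \<Rightarrow> bool" where
  "loewner_le A B \<longleftrightarrow> psd (B - A)"

definition Her_Q :: "(complex^'n::finite^'n) set" where
  "Her_Q = {A. hermitian A \<and> (\<forall>i j. Re (A $ i $ j) \<in> \<rat> \<and> Im (A $ i $ j) \<in> \<rat>)}"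

definition semi_POVM :: "(bool list \<Rightarrow> complex^'n::finite^'n) \<Rightarrow> bool" where
  "semi_POVM R \<longleftrightarrow> (\<forall>s. hermitian (R s) \<and> loewner_le 0 (R s)) \<and>
     R summable_on UNIV \<and> loewner_le (infsum R UNIV) (mat 1)"

definition lower_computable_semi_POVM :: "(bool list \<Rightarrow> complex^'n::finite^'n) \<Rightarrow> bool" where
  "lower_computable_semi_POVM R \<longleftrightarrow> semi_POVM R \<and>
     (\<exists>f. computable_mat_fun f \<and> (\<forall>n s. f n s \<in> Her_Q) \<and>
          (\<forall>s. (\<lambda>n. f n s) \<longlonglongrightarrow> R s) \<and>
          (\<forall>n s. loewner_le (f n s) (R s)))"

definition universal_semi_POVM :: "(bool list \<Rightarrow> complex^'n::finite^'n) \<Rightarrow> bool" where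
  "universal_semi_POVM M \<longleftrightarrow> lower_computable_semi_POVM M \<and>
     (\<forall>R::bool list \<Rightarrow> complex^'n^'n. lower_computable_semi_POVM R \<longrightarrow>
        (\<exists>c::real>0. \<forall>s. loewner_le (c *\<^sub>R R s) (M s)))"

end

theory Submission
  imports Defs
begin

definition rec_fn :: "nat \<Rightarrow> (nat list \<Rightarrow> nat) \<Rightarrow> bool" where
  "rec_fn k F \<longleftrightarrow> (\<exists>c. \<forall>xs. length xs = k \<longrightarrow> eval_rf c xs (F xs))"

lemma rec_fn_cong:
  assumes "rec_fn k F" "\<And>xs. length xs = k \<Longrightarrow> F xs = G xs"
  shows "rec_fn k G"
  using assms unfolding rec_fn_def by metis

lemma rec_zero: "rec_fn k (\<lambda>_. 0)"
  unfolding rec_fn_def by (auto intro: eval_rf.intros)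

lemma rec_proj: "i < k \<Longrightarrow> rec_fn k (\<lambda>xs. xs ! i)"
  unfolding rec_fn_def by (rule exI[of _ "RProj i"]) (auto intro: eval_rf.intros)

lemma rec_succ1: "rec_fn 1 (\<lambda>xs. Suc (xs ! 0))"
  unfolding rec_fn_def
proof (rule exI[of _ RSucc], intro allI impI)
  fix xs :: "nat list" assume "length xs = 1"
  then obtain x where "xs = [x]" by (cases xs) auto
  then show "eval_rf RSucc xs (Suc (xs ! 0))" by (auto intro: eval_rf.intros)
qed

lemma rec_progs:
  assumes "\<forall>G\<in>set Gs. rec_fn k G"
  shows "\<exists>cs. list_all2 (\<lambda>c G. \<forall>xs. length xs = k \<longrightarrow> eval_rf c xs (G xs)) cs Gs"
  using assms
proof (induction Gs)
  case Nil then show ?case by auto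
next
  case (Cons G Gs)
  then obtain cs where "list_all2 (\<lambda>c G. \<forall>xs. length xs = k \<longrightarrow> eval_rf c xs (G xs)) cs Gs" by auto
  moreover from Cons.prems obtain c where "\<forall>xs. length xs = k \<longrightarrow> eval_rf c xs (G xs)"
    unfolding rec_fn_def by auto
  ultimately show ?case by (intro exI[of _ "c # cs"]) auto
qed

lemma rec_comp_list:
  assumes "rec_fn (length Gs) g" "\<forall>G\<in>set Gs. rec_fn k G"
  shows "rec_fn k (\<lambda>xs. g (map (\<lambda>G. G xs) Gs))"
proof -
  obtain cs where cs: "list_all2 (\<lambda>c G. \<forall>xs. length xs = k \<longrightarrow> eval_rf c xs (G xs)) cs Gs"
    using rec_progs[OF assms(2)] by auto
  obtain cg where cg: "\<forall>ys. length ys = length Gs \<longrightarrow> eval_rf cg ys (g ys)"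
    using assms(1) unfolding rec_fn_def by auto
  show ?thesis unfolding rec_fn_def
  proof (rule exI[of _ "RComp cg cs"], intro allI impI)
    fix xs :: "nat list" assume len: "length xs = k"
    have "list_all2 (\<lambda>c y. eval_rf c xs y) cs (map (\<lambda>G. G xs) Gs)"
      unfolding list_all2_map2 using cs len by (auto elim: list_all2_mono)
    moreover have "eval_rf cg (map (\<lambda>G. G xs) Gs) (g (map (\<lambda>G. G xs) Gs))"
      using cg by simp
    ultimately show "eval_rf (RComp cg cs) xs (g (map (\<lambda>G. G xs) Gs))"
      by (rule ev_comp)
  qed
qed

lemma rec_comp1:
  assumes "rec_fn 1 (\<lambda>xs. g (xs ! 0))" "rec_fn k A"
  shows "rec_fn k (\<lambda>xs. g (A xs))"
  using rec_comp_list[of "[A]" "\<lambda>xs. g (xs ! 0)" k] assms by simp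

lemma rec_comp2:
  assumes "rec_fn 2 (\<lambda>xs. g (xs ! 0) (xs ! 1))" "rec_fn k A" "rec_fn k B"
  shows "rec_fn k (\<lambda>xs. g (A xs) (B xs))"
  using rec_comp_list[of "[A, B]" "\<lambda>xs. g (xs ! 0) (xs ! 1)" k] assms by (simp add: numeral_2_eq_2)

lemma rec_comp3:
  assumes "rec_fn 3 (\<lambda>xs. g (xs ! 0) (xs ! 1) (xs ! 2))" "rec_fn k A" "rec_fn k B" "rec_fn k C"
  shows "rec_fn k (\<lambda>xs. g (A xs) (B xs) (C xs))"
  using rec_comp_list[of "[A, B, C]" "\<lambda>xs. g (xs ! 0) (xs ! 1) (xs ! 2)" k] assms
  by (simp add: numeral_3_eq_3)

lemma rec_Suc: "rec_fn k A \<Longrightarrow> rec_fn k (\<lambda>xs. Suc (A xs))"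
  using rec_comp1[OF rec_succ1] .

lemma rec_const: "rec_fn k (\<lambda>_. n)"
  by (induction n) (auto intro: rec_zero rec_Suc)

lemma rec_prec:
  assumes "rec_fn k f" "rec_fn (Suc (Suc k)) g"
  shows "rec_fn (Suc k) (\<lambda>xs. rec_nat (f (tl xs)) (\<lambda>n y. g (n # y # tl xs)) (hd xs))"
proof -
  obtain cf where cf: "\<forall>xs. length xs = k \<longrightarrow> eval_rf cf xs (f xs)"
    using assms(1) unfolding rec_fn_def by auto
  obtain cg where cg: "\<forall>xs. length xs = Suc (Suc k) \<longrightarrow> eval_rf cg xs (g xs)"
    using assms(2) unfolding rec_fn_def by auto
  have main: "eval_rf (RPrec cf cg) (n # ys) (rec_nat (f ys) (\<lambda>n y. g (n # y # ys)) n)"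
    if "length ys = k" for n ys
  proof (induction n)
    case 0 then show ?case using cf that by (auto intro: ev_prec0)
  next
    case (Suc n) then show ?case using cg that by (auto intro: ev_precS)
  qed
  show ?thesis unfolding rec_fn_def
  proof (rule exI[of _ "RPrec cf cg"], intro allI impI)
    fix xs :: "nat list" assume "length xs = Suc k"
    then obtain n ys where "xs = n # ys" "length ys = k" by (cases xs) auto
    then show "eval_rf (RPrec cf cg) xs (rec_nat (f (tl xs)) (\<lambda>n y. g (n # y # tl xs)) (hd xs))"
      using main by simp
  qed
qed

lemma rec_min:
  assumes "rec_fn (Suc k) f" "\<And>xs. length xs = k \<Longrightarrow> \<exists>n. f (n # xs) = 0"
  shows "rec_fn k (\<lambda>xs. LEAST n. f (n # xs) = 0)"
proof -
  obtain cf where cf: "\<forall>xs. length xs = Suc k \<longrightarrow> eval_rf cf xs (f xs)"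
    using assms(1) unfolding rec_fn_def by auto
  show ?thesis unfolding rec_fn_def
  proof (rule exI[of _ "RMin cf"], intro allI impI)
    fix xs :: "nat list" assume len: "length xs = k"
    let ?n = "LEAST n. f (n # xs) = 0"
    have z: "f (?n # xs) = 0" using assms(2)[OF len] by (rule LeastI_ex)
    have nz: "\<forall>j<?n. \<exists>y. y \<noteq> 0 \<and> eval_rf cf (j # xs) y"
    proof (intro allI impI)
      fix j assume "j < ?n"
      then have "f (j # xs) \<noteq> 0" by (rule not_less_Least)
      moreover have "eval_rf cf (j # xs) (f (j # xs))" using cf len by simp
      ultimately show "\<exists>y. y \<noteq> 0 \<and> eval_rf cf (j # xs) y" by blast
    qed
    have "eval_rf cf (?n # xs) 0" using cf len z by (metis length_Cons)
    then show "eval_rf (RMin cf) xs ?n"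
      using nz by (rule ev_min)
  qed
qed

lemma len1: "length xs = Suc 0 \<Longrightarrow> xs = [xs ! 0]"
  by (cases xs) auto
lemma len2: "length xs = 2 \<Longrightarrow> xs = [xs ! 0, xs ! 1]"
  by (cases xs; cases "tl xs") (auto simp: numeral_2_eq_2)
lemma len3: "length xs = 3 \<Longrightarrow> xs = [xs ! 0, xs ! 1, xs ! 2]"
  by (cases xs; cases "tl xs"; cases "tl (tl xs)") (auto simp: numeral_3_eq_3)

lemma rec_fn_cong2:
  assumes "rec_fn k F" "k = k'" "\<And>xs. length xs = k' \<Longrightarrow> F xs = G xs"
  shows "rec_fn k' G"
  using assms rec_fn_cong by blast

lemma rec_add2: "rec_fn 2 (\<lambda>xs. xs ! 0 + xs ! 1)"
proof -
  have R: "rec_fn (Suc 1) (\<lambda>xs. rec_nat ((\<lambda>ys. ys ! 0) (tl xs)) (\<lambda>n y. (\<lambda>zs. Suc (zs ! 1)) (n # y # tl xs)) (hd xs))"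
    by (rule rec_prec) (intro rec_proj rec_Suc; simp)+
  have E: "rec_nat x (\<lambda>n y. Suc y) n = n + x" for x n :: nat by (induction n) auto
  show ?thesis
    by (rule rec_fn_cong2[OF R]) (auto simp: E length_Suc_conv numeral_2_eq_2 numeral_3_eq_3)
qed

lemma rec_add: "rec_fn k A \<Longrightarrow> rec_fn k B \<Longrightarrow> rec_fn k (\<lambda>xs. A xs + B xs)"
  by (rule rec_comp2[OF rec_add2])

lemma rec_mult2: "rec_fn 2 (\<lambda>xs. xs ! 0 * xs ! 1)"
proof -
  have R: "rec_fn (Suc 1) (\<lambda>xs. rec_nat ((\<lambda>ys. 0) (tl xs)) (\<lambda>n y. (\<lambda>zs. zs ! 1 + zs ! 2) (n # y # tl xs)) (hd xs))"
    by (rule rec_prec) (intro rec_proj rec_add rec_zero; simp)+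
  have E: "rec_nat 0 (\<lambda>n y. y + x) n = n * x" for x n :: nat by (induction n) auto
  show ?thesis
    by (rule rec_fn_cong2[OF R]) (auto simp: E length_Suc_conv numeral_2_eq_2 numeral_3_eq_3)
qed

lemma rec_mult: "rec_fn k A \<Longrightarrow> rec_fn k B \<Longrightarrow> rec_fn k (\<lambda>xs. A xs * B xs)"
  by (rule rec_comp2[OF rec_mult2])

lemma rec_pred1: "rec_fn 1 (\<lambda>xs. xs ! 0 - 1)"
proof -
  have R: "rec_fn (Suc 0) (\<lambda>xs. rec_nat ((\<lambda>ys. 0) (tl xs)) (\<lambda>n y. (\<lambda>zs. zs ! 0) (n # y # tl xs)) (hd xs))"
    by (rule rec_prec) (intro rec_proj rec_zero; simp)+
  have E: "rec_nat 0 (\<lambda>n y. n) n = n - 1" for n :: nat by (induction n) auto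
  show ?thesis
    by (rule rec_fn_cong2[OF R]) (auto simp: E length_Suc_conv numeral_2_eq_2 numeral_3_eq_3)
qed

lemma rec_pred: "rec_fn k A \<Longrightarrow> rec_fn k (\<lambda>xs. A xs - 1)"
  by (rule rec_comp1[OF rec_pred1])

lemma rec_monus2: "rec_fn 2 (\<lambda>xs. xs ! 1 - xs ! 0)"
proof -
  have R: "rec_fn (Suc 1) (\<lambda>xs. rec_nat ((\<lambda>ys. ys ! 0) (tl xs)) (\<lambda>n y. (\<lambda>zs. zs ! 1 - 1) (n # y # tl xs)) (hd xs))"
    by (rule rec_prec) (intro rec_proj rec_pred; simp)+
  have E: "rec_nat x (\<lambda>n y. y - Suc 0) n = x - n" for x n :: nat by (induction n) auto
  show ?thesis
    by (rule rec_fn_cong2[OF R]) (auto simp: E length_Suc_conv numeral_2_eq_2 numeral_3_eq_3)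
qed

lemma rec_minus: "rec_fn k A \<Longrightarrow> rec_fn k B \<Longrightarrow> rec_fn k (\<lambda>xs. A xs - B xs)"
  using rec_comp2[OF rec_monus2, of k B A] by simp

lemma rec_cond3: "rec_fn 3 (\<lambda>xs. if xs ! 0 = 0 then xs ! 1 else xs ! 2)"
proof -
  have R: "rec_fn (Suc 2) (\<lambda>xs. rec_nat ((\<lambda>ys. ys ! 0) (tl xs)) (\<lambda>n y. (\<lambda>zs. zs ! 3) (n # y # tl xs)) (hd xs))"
    by (rule rec_prec) (intro rec_proj; simp)+
  have E: "rec_nat x (\<lambda>n y. z) n = (if n = 0 then x else z)" for x z n :: nat by (cases n) auto
  show ?thesis
    by (rule rec_fn_cong2[OF R]) (auto simp: E length_Suc_conv numeral_2_eq_2 numeral_3_eq_3)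
qed

lemma rec_if0: "rec_fn k A \<Longrightarrow> rec_fn k B \<Longrightarrow> rec_fn k C \<Longrightarrow>
   rec_fn k (\<lambda>xs. if A xs = 0 then B xs else C xs)"
  by (rule rec_comp3[OF rec_cond3])

lemma rec_if_le: "rec_fn k A \<Longrightarrow> rec_fn k A' \<Longrightarrow> rec_fn k B \<Longrightarrow> rec_fn k C \<Longrightarrow>
   rec_fn k (\<lambda>xs. if A xs \<le> A' xs then B xs else C xs)"
  using rec_if0[of k "\<lambda>xs. A xs - A' xs" B C] rec_minus by simp

lemma rec_if_eq:
  assumes "rec_fn k A" "rec_fn k A'" "rec_fn k B" "rec_fn k C"
  shows "rec_fn k (\<lambda>xs. if A xs = A' xs then B xs else C xs)"
proof -
  have "rec_fn k (\<lambda>xs. if A xs - A' xs + (A' xs - A xs) = 0 then B xs else C xs)"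
    by (intro rec_if0 rec_add rec_minus assms)
  then show ?thesis by (rule rec_fn_cong) auto
qed

lemma rec_triangle1: "rec_fn 1 (\<lambda>xs. triangle (xs ! 0))"
proof -
  have R: "rec_fn (Suc 0) (\<lambda>xs. rec_nat ((\<lambda>ys. 0) (tl xs)) (\<lambda>n y. (\<lambda>zs. zs ! 1 + Suc (zs ! 0)) (n # y # tl xs)) (hd xs))"
    by (rule rec_prec) (intro rec_proj rec_zero rec_add rec_Suc; simp)+
  have E: "rec_nat 0 (\<lambda>n y. Suc (y + n)) n = triangle n" for n :: nat by (induction n) auto
  show ?thesis
    by (rule rec_fn_cong2[OF R]) (auto simp: E length_Suc_conv numeral_2_eq_2 numeral_3_eq_3)
qed

lemma rec_triangle: "rec_fn k A \<Longrightarrow> rec_fn k (\<lambda>xs. triangle (A xs))"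
  by (rule rec_comp1[OF rec_triangle1])

lemma rec_mod2_1: "rec_fn 1 (\<lambda>xs. xs ! 0 mod 2)"
proof -
  have R: "rec_fn (Suc 0) (\<lambda>xs. rec_nat ((\<lambda>ys. 0) (tl xs)) (\<lambda>n y. (\<lambda>zs. 1 - zs ! 1) (n # y # tl xs)) (hd xs))"
    by (rule rec_prec) (intro rec_proj rec_zero rec_minus rec_const; simp)+
  have E0: "rec_nat 0 (\<lambda>n y. 1 - y) n = n mod 2" for n :: nat
  proof (induction n)
    case (Suc n)
    have "n mod 2 = 0 \<or> n mod 2 = 1" by auto
    then show ?case using Suc by (auto simp: mod_Suc)
  qed simp
  have E: "rec_nat 0 (\<lambda>n. (-) (Suc 0)) n = n mod Suc (Suc 0)" for n :: nat
    using E0[of n] by (simp add: numeral_2_eq_2)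
  show ?thesis
    by (rule rec_fn_cong2[OF R]) (auto simp: E length_Suc_conv numeral_2_eq_2 numeral_3_eq_3)
qed

lemma rec_mod2: "rec_fn k A \<Longrightarrow> rec_fn k (\<lambda>xs. A xs mod 2)"
  by (rule rec_comp1[OF rec_mod2_1])

lemma rec_div2_1: "rec_fn 1 (\<lambda>xs. xs ! 0 div 2)"
proof -
  have R: "rec_fn (Suc 0) (\<lambda>xs. rec_nat ((\<lambda>ys. 0) (tl xs)) (\<lambda>n y. (\<lambda>zs. zs ! 1 + zs ! 0 mod 2) (n # y # tl xs)) (hd xs))"
    by (rule rec_prec) (intro rec_proj rec_zero rec_add rec_mod2; simp)+
  have E0: "rec_nat 0 (\<lambda>n y. y + n mod 2) n = n div 2" for n :: nat
  proof (induction n)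
    case (Suc n)
    have "n mod 2 = 0 \<or> n mod 2 = 1" by auto
    then show ?case using Suc by (auto simp: mod_Suc div_Suc)
  qed simp
  have E: "rec_nat 0 (\<lambda>n y. y + n mod Suc (Suc 0)) n = n div Suc (Suc 0)" for n :: nat
    using E0[of n] by (simp add: numeral_2_eq_2)
  show ?thesis
    by (rule rec_fn_cong2[OF R]) (auto simp: E length_Suc_conv numeral_2_eq_2 numeral_3_eq_3)
qed

lemma rec_div2: "rec_fn k A \<Longrightarrow> rec_fn k (\<lambda>xs. A xs div 2)"
  by (rule rec_comp1[OF rec_div2_1])

definition tri_inv :: "nat \<Rightarrow> nat" where
  "tri_inv x = (LEAST t. Suc x - triangle (Suc t) = 0)"

lemma triangle_ge: "n \<le> triangle n"
  by (induction n) auto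

lemma tri_inv_props: "triangle (tri_inv x) \<le> x \<and> x < triangle (Suc (tri_inv x))"
proof -
  have ex: "\<exists>t. Suc x - triangle (Suc t) = 0"
    using triangle_ge[of "Suc x"] by (intro exI[of _ x]) simp
  have 1: "Suc x - triangle (Suc (tri_inv x)) = 0"
    unfolding tri_inv_def using ex by (rule LeastI_ex)
  have 2: "triangle (tri_inv x) \<le> x"
  proof (cases "tri_inv x")
    case 0 then show ?thesis by simp
  next
    case (Suc t)
    then have "t < tri_inv x" by simp
    then have "Suc x - triangle (Suc t) \<noteq> 0" unfolding tri_inv_def by (rule not_less_Least)
    then show ?thesis using Suc by simp
  qed
  show ?thesis using 1 2 by simp
qed

lemma prod_decode_tri: "prod_decode x = (x - triangle (tri_inv x), tri_inv x - (x - triangle (tri_inv x)))"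
proof -
  let ?t = "tri_inv x"
  let ?a = "x - triangle ?t" and ?b = "?t - (x - triangle ?t)"
  have "prod_encode (?a, ?b) = x"
    using tri_inv_props[of x] by (simp add: prod_encode_def)
  then show ?thesis by (metis prod_encode_inverse)
qed

lemma rec_tri_inv1: "rec_fn 1 (\<lambda>xs. tri_inv (xs ! 0))"
proof -
  have "rec_fn 1 (\<lambda>xs. LEAST t. (\<lambda>zs. Suc (zs ! 1) - triangle (Suc (zs ! 0))) (t # xs) = 0)"
  proof (rule rec_min)
    show "rec_fn (Suc 1) (\<lambda>zs. Suc (zs ! 1) - triangle (Suc (zs ! 0)))"
      by (intro rec_minus rec_Suc rec_triangle rec_proj; simp)
    fix xs :: "nat list"
    show "\<exists>n. (\<lambda>zs. Suc (zs ! 1) - triangle (Suc (zs ! 0))) (n # xs) = 0"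
      using triangle_ge[of "Suc (xs ! 0)"] by (intro exI[of _ "xs ! 0"]) simp
  qed
  then show ?thesis unfolding tri_inv_def by simp
qed

lemma rec_fst_pd: "rec_fn k A \<Longrightarrow> rec_fn k (\<lambda>xs. fst (prod_decode (A xs)))"
  unfolding prod_decode_tri fst_conv
  by (intro rec_minus rec_triangle rec_comp1[OF rec_tri_inv1])

lemma rec_snd_pd: "rec_fn k A \<Longrightarrow> rec_fn k (\<lambda>xs. snd (prod_decode (A xs)))"
  unfolding prod_decode_tri snd_conv
  by (intro rec_minus rec_triangle rec_comp1[OF rec_tri_inv1])

lemma pe_eq: "prod_encode (a, b) = triangle (a + b) + a"
  by (simp add: prod_encode_def)

lemma rec_pe: "rec_fn k A \<Longrightarrow> rec_fn k B \<Longrightarrow> rec_fn k (\<lambda>xs. prod_encode (A xs, B xs))"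
  unfolding pe_eq by (intro rec_add rec_triangle)

lemma rec_total1: "total_recursive h \<Longrightarrow> rec_fn 1 (\<lambda>xs. h (xs ! 0))"
proof -
  assume "total_recursive h"
  then obtain c where c: "\<forall>x. eval_rf c [x] (h x)" unfolding total_recursive_def by auto
  show ?thesis unfolding rec_fn_def
  proof (rule exI[of _ c], intro allI impI)
    fix xs :: "nat list" assume "length xs = 1"
    then obtain y where "xs = [y]" by (auto simp: length_Suc_conv)
    then show "eval_rf c xs (h (xs ! 0))" using c by simp
  qed
qed

lemma rec_total: "total_recursive h \<Longrightarrow> rec_fn k A \<Longrightarrow> rec_fn k (\<lambda>xs. h (A xs))"
  by (rule rec_comp1[OF rec_total1])

lemma total_rec_of: "rec_fn 1 (\<lambda>xs. h (xs ! 0)) \<Longrightarrow> total_recursive h"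
  unfolding total_recursive_def rec_fn_def
  by (metis One_nat_def length_Cons list.size(3) nth_Cons_0)

definition rle_code :: "nat \<Rightarrow> nat \<Rightarrow> nat" where
  "rle_code a b = (if fst (prod_decode a) mod 2 = 0 then
      (if fst (prod_decode b) mod 2 = 0 then
         fst (prod_decode a) div 2 * Suc (snd (prod_decode b)) - fst (prod_decode b) div 2 * Suc (snd (prod_decode a))
       else 1)
    else (if fst (prod_decode b) mod 2 = 0 then 0 else
         Suc (fst (prod_decode b) div 2) * Suc (snd (prod_decode a)) - Suc (fst (prod_decode a) div 2) * Suc (snd (prod_decode b))))"

lemma rec_rle: "rec_fn k A \<Longrightarrow> rec_fn k B \<Longrightarrow> rec_fn k (\<lambda>xs. rle_code (A xs) (B xs))"
  unfolding rle_code_def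
  by (intro rec_if0 rec_minus rec_mult rec_div2 rec_Suc rec_fst_pd rec_snd_pd rec_mod2 rec_const)

lemma int_decode_alt: "int_decode p = (if p mod 2 = 0 then int (p div 2) else - int (Suc (p div 2)))"
  unfolding int_decode_def sum_decode_def by (auto simp: even_iff_mod_2_eq_zero)

lemma rat_of_code_alt: "rat_of_code a = of_int (int_decode (fst (prod_decode a))) / of_int (int (snd (prod_decode a)) + 1)"
  unfolding rat_of_code_def by (simp add: case_prod_beta Fract_of_int_quotient)

lemma frac_le_iff: "(0::rat) < y \<Longrightarrow> 0 < w \<Longrightarrow> x / y \<le> z / w \<longleftrightarrow> x * w \<le> z * y"
  by (simp add: divide_le_eq le_divide_eq mult.commute mult.left_commute pos_divide_le_eq pos_le_divide_eq)

lemma e1: "int x * (int y + 1) = int (x * Suc y)" by (simp add: algebra_simps)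

lemma L1: "int a * (int b + 1) \<le> int c * (int d + 1) \<longleftrightarrow> a * Suc b - c * Suc d = 0"
  unfolding e1 of_nat_le_iff by simp

lemma L2: "(int a * (int b + 1) \<le> - int (Suc c) * (int d + 1)) \<longleftrightarrow> (1::nat) = 0"
proof -
  have "0 \<le> int a * (int b + 1)" by simp
  moreover have "- int (Suc c) * (int d + 1) < 0"
    by (rule mult_neg_pos) simp_all
  ultimately have "\<not> (int a * (int b + 1) \<le> - int (Suc c) * (int d + 1))" by linarith
  then show ?thesis by simp
qed

lemma L3: "(- int (Suc a) * (int b + 1) \<le> int c * (int d + 1)) \<longleftrightarrow> (0::nat) = 0"
proof -
  have "0 \<le> int c * (int d + 1)" by simp
  moreover have "- int (Suc a) * (int b + 1) < 0"
    by (rule mult_neg_pos) simp_all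
  ultimately have "- int (Suc a) * (int b + 1) \<le> int c * (int d + 1)" by linarith
  then show ?thesis by simp
qed

lemma L4: "(- int (Suc a) * (int b + 1) \<le> - int (Suc c) * (int d + 1)) \<longleftrightarrow> Suc c * Suc d - Suc a * Suc b = 0"
proof -
  have "(- int (Suc a) * (int b + 1) \<le> - int (Suc c) * (int d + 1)) \<longleftrightarrow>
        int (Suc c) * (int d + 1) \<le> int (Suc a) * (int b + 1)" by (simp only: mult_minus_left neg_le_iff_le)
  also have "\<dots> \<longleftrightarrow> Suc c * Suc d - Suc a * Suc b = 0" by (rule L1)
  finally show ?thesis .
qed

lemma rle_code_correct: "rat_of_code a \<le> rat_of_code b \<longleftrightarrow> rle_code a b = 0"
proof -
  define p where "p = fst (prod_decode a)"
  define q where "q = snd (prod_decode a)"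
  define r where "r = fst (prod_decode b)"
  define t where "t = snd (prod_decode b)"
  have "rat_of_code a \<le> rat_of_code b \<longleftrightarrow>
     of_int (int_decode p) * of_int (int t + 1) \<le> (of_int (int_decode r) * of_int (int q + 1) :: rat)"
    unfolding rat_of_code_alt p_def q_def r_def t_def
    by (rule frac_le_iff) (simp_all add: add.commute add_pos_nonneg)
  also have "\<dots> \<longleftrightarrow> int_decode p * (int t + 1) \<le> int_decode r * (int q + 1)"
    by (metis of_int_le_iff of_int_mult)
  also have "\<dots> \<longleftrightarrow> rle_code a b = 0"
    unfolding rle_code_def p_def[symmetric] q_def[symmetric] r_def[symmetric] t_def[symmetric] int_decode_alt
    by (cases "p mod 2 = 0"; cases "r mod 2 = 0") (simp_all only: if_True if_False L1 L2 L3 L4 simp_thms)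
  finally show ?thesis .
qed

definition qf :: "complex^'n::finite^'n \<Rightarrow> complex^'n \<Rightarrow> complex" where
  "qf A v = (\<Sum>i\<in>UNIV. \<Sum>j\<in>UNIV. cnj (v $ i) * A $ i $ j * v $ j)"

lemma smat: "(c *\<^sub>R A) $ i $ j = complex_of_real c * (A $ i $ j :: complex)"
proof -
  have "(c *\<^sub>R A) $ i $ j = c *\<^sub>R (A $ i $ j)" by simp
  also have "\<dots> = complex_of_real c * A $ i $ j" by (simp add: scaleR_conv_of_real)
  finally show ?thesis .
qed

lemma mult_delta: "x * (if P then 1 else 0) * y = (if P then x * y else (0::complex))"
  by simp

lemma mat1: "mat 1 $ i $ j = (if i = j then 1 else 0)"
  by (simp add: mat_def)

lemma cnj_if: "cnj (if P then x else y) = (if P then cnj x else cnj y)" by simp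
lemma if_mult1: "(if P then x else 0) * y = (if P then x * y else (0::complex))" by simp
lemma if_mult2: "y * (if P then x else 0) = (if P then y * x else (0::complex))" by simp

lemma psd_qf: "psd A \<longleftrightarrow> hermitian A \<and> (\<forall>v. 0 \<le> Re (qf A v))"
  unfolding psd_def qf_def by simp

lemma qf_diff: "qf (A - B) v = qf A v - qf B v"
  unfolding qf_def by (simp add: algebra_simps sum_subtractf)

lemma qf_scaleR: "qf (c *\<^sub>R A) v = of_real c * qf A v"
  unfolding qf_def smat by (simp add: sum_distrib_left algebra_simps)

lemma qf_id: "qf (mat 1) v = of_real (\<Sum>i\<in>UNIV. (cmod (v $ i))\<^sup>2)"
proof -
  have "qf (mat 1) v = (\<Sum>i\<in>UNIV. cnj (v $ i) * v $ i)"
    unfolding qf_def mat1 mult_delta by simp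
  also have "\<dots> = (\<Sum>i\<in>UNIV. of_real ((cmod (v $ i))\<^sup>2))"
    by (intro sum.cong refl) (simp only: complex_norm_square mult.commute)
  finally show ?thesis by simp
qed

lemma hermitian_id: "hermitian (c *\<^sub>R (mat 1 :: complex^'n::finite^'n))"
  unfolding hermitian_def smat mat1 by auto

lemma hermitian_diff:
  assumes "hermitian A" "hermitian B" shows "hermitian (A - B)"
  unfolding hermitian_def
proof (intro allI)
  fix i j
  have "A $ i $ j = cnj (A $ j $ i)" "B $ i $ j = cnj (B $ j $ i)"
    using assms unfolding hermitian_def by blast+
  then show "(A - B) $ i $ j = cnj ((A - B) $ j $ i)" by simp
qed

lemma hermitian_scaleR:
  assumes "hermitian A" shows "hermitian (c *\<^sub>R A)"
  unfolding hermitian_def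
proof (intro allI)
  fix i j
  have "A $ i $ j = cnj (A $ j $ i)"
    using assms unfolding hermitian_def by blast
  then show "(c *\<^sub>R A) $ i $ j = cnj ((c *\<^sub>R A) $ j $ i)" unfolding smat by simp
qed

lemma hermitian_zero: "hermitian 0"
  unfolding hermitian_def by simp

lemma psd_id: "0 \<le> c \<Longrightarrow> psd (c *\<^sub>R (mat 1 :: complex^'n::finite^'n))"
  unfolding psd_qf using hermitian_id by (simp add: qf_scaleR qf_id sum_nonneg)

lemma psd_diag:
  fixes A :: "complex^'n::finite^'n"
  assumes "psd A" shows "0 \<le> Re (A $ i $ i)"
proof -
  let ?v = "(\<chi> k. if k = i then 1 else 0) :: complex^'n"
  have "qf A ?v = A $ i $ i"
    unfolding qf_def by (simp add: cnj_if if_mult1 if_mult2 cong: if_cong)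
  moreover have "0 \<le> Re (qf A ?v)" using assms unfolding psd_qf by blast
  ultimately show ?thesis by simp
qed

lemma hermitian_diag_real: "hermitian A \<Longrightarrow> A $ i $ i = of_real (Re (A $ i $ i))"
proof -
  assume "hermitian A"
  then have "A $ i $ i = cnj (A $ i $ i)" unfolding hermitian_def by blast
  then have "Im (A $ i $ i) = 0" by (metis complex_cnj_zero_iff cnj.sel(2) neg_equal_zero)
  then show ?thesis by (simp add: complex_eq_iff)
qed

lemma psd_offdiag:
  fixes A :: "complex^'n::finite^'n"
  assumes "psd A" "i \<noteq> j"
  shows "2 * cmod (A $ i $ j) \<le> Re (A $ i $ i) + Re (A $ j $ j)"
proof -
  define a where "a = A $ i $ j"
  define w where "w = - cnj (sgn a)"
  let ?v = "(\<chi> k. (if k = i then 1 else 0) + (if k = j then w else 0)) :: complex^'n"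
  have "hermitian A" using assms(1) unfolding psd_def by blast
  then have "A $ j $ i = cnj (A $ i $ j)" unfolding hermitian_def by blast
  then have herm: "A $ j $ i = cnj a" unfolding a_def .
  have vb: "?v $ b = (if b = i then 1 else 0) + (if b = j then w else 0)" for b by simp
  have inner: "(\<Sum>b\<in>UNIV. A $ x $ b * ?v $ b) = A $ x $ i + A $ x $ j * w" for x
    unfolding vb distrib_left if_mult2 sum.distrib by (simp add: sum.delta)
  have outer: "(\<Sum>x\<in>UNIV. cnj (?v $ x) * f x) = f i + cnj w * f j" for f
    unfolding vb complex_cnj_add cnj_if complex_cnj_zero complex_cnj_one distrib_right if_mult1 sum.distrib by (simp add: sum.delta)
  have "qf A ?v = (\<Sum>x\<in>UNIV. cnj (?v $ x) * (\<Sum>b\<in>UNIV. A $ x $ b * ?v $ b))"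
    unfolding qf_def sum_distrib_left by (simp only: mult.assoc)
  also have "\<dots> = (A $ i $ i + A $ i $ j * w) + cnj w * (A $ j $ i + A $ j $ j * w)"
    unfolding inner outer ..
  finally have q: "qf A ?v = (A $ i $ i + A $ i $ j * w) + cnj w * (A $ j $ i + A $ j $ j * w)" .
  have "a * cnj (sgn a) = of_real (cmod a)"
  proof (cases "a = 0")
    case False
    have "a * cnj (sgn a) = a * cnj a / of_real (cmod a)"
      by (simp add: sgn_div_norm divide_inverse scaleR_conv_of_real mult.commute)
    also have "\<dots> = of_real ((cmod a)\<^sup>2) / of_real (cmod a)"
      by (simp only: complex_norm_square)
    also have "\<dots> = of_real (cmod a)" using False by (simp add: power2_eq_square)
    finally show ?thesis .
  qed simp
  then have aw: "a * w = - of_real (cmod a)" unfolding w_def by simp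
  then have aw2: "cnj w * cnj a = - of_real (cmod a)"
    by (metis complex_cnj_complex_of_real complex_cnj_minus complex_cnj_mult mult.commute)
  have ww: "cnj w * w = of_real ((cmod w)\<^sup>2)" by (metis complex_norm_square mult.commute)
  have "qf A ?v = A $ i $ i + (cnj w * w) * A $ j $ j - 2 * of_real (cmod a)"
    unfolding q herm a_def[symmetric] using aw aw2 by (simp add: algebra_simps)
  then have r1: "Re (qf A ?v) = Re (A $ i $ i) + (cmod w)\<^sup>2 * Re (A $ j $ j) - 2 * cmod a"
    unfolding ww by simp
  moreover have r2: "0 \<le> Re (qf A ?v)" using assms(1) unfolding psd_qf by blast
  moreover have "(cmod w)\<^sup>2 \<le> 1" unfolding w_def by (cases "a = 0") (simp_all add: norm_sgn)
  moreover have "0 \<le> Re (A $ j $ j)" using psd_diag assms(1) by blast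
  ultimately have "(cmod w)\<^sup>2 * Re (A $ j $ j) \<le> Re (A $ j $ j)"
    by (simp add: mult_left_le_one_le)
  then show ?thesis using r1 r2 unfolding a_def by linarith
qed

lemma psd_entry_bound:
  fixes A :: "complex^'n::finite^'n"
  assumes "psd A"
  shows "cmod (A $ a $ b) \<le> (\<Sum>k\<in>UNIV. Re (A $ k $ k))"
proof -
  have herm: "hermitian A" using assms unfolding psd_def by blast
  have nn: "\<And>k. 0 \<le> Re (A $ k $ k)" using psd_diag[OF assms] .
  show ?thesis
  proof (cases "a = b")
    case True
    have "cmod (A $ a $ a) = Re (A $ a $ a)"
      using hermitian_diag_real[OF herm, of a] nn[of a] by (metis norm_of_real abs_of_nonneg)
    also have "\<dots> \<le> (\<Sum>k\<in>UNIV. Re (A $ k $ k))"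
      by (rule member_le_sum) (use nn in auto)
    finally show ?thesis using True by simp
  next
    case False
    have "2 * cmod (A $ a $ b) \<le> Re (A $ a $ a) + Re (A $ b $ b)"
      by (rule psd_offdiag[OF assms False])
    also have "\<dots> = (\<Sum>k\<in>{a, b}. Re (A $ k $ k))" using False by simp
    also have "\<dots> \<le> (\<Sum>k\<in>UNIV. Re (A $ k $ k))"
      by (rule sum_mono2) (use nn in auto)
    finally have "2 * cmod (A $ a $ b) \<le> (\<Sum>k\<in>UNIV. Re (A $ k $ k))" .
    moreover have "0 \<le> (\<Sum>k\<in>UNIV. Re (A $ k $ k))" using nn by (simp add: sum_nonneg)
    ultimately show ?thesis by linarith
  qed
qed

lemma psd_bound:
  fixes A :: "complex^'n::finite^'n"
  assumes "psd A"
  shows "Re (qf A v) \<le> real CARD('n) * (\<Sum>k\<in>UNIV. Re (A $ k $ k)) * (\<Sum>i\<in>UNIV. (cmod (v $ i))\<^sup>2)"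
proof -
  define T where "T = (\<Sum>k\<in>UNIV. Re (A $ k $ k))"
  define x where "x i = cmod (v $ i)" for i
  have T: "cmod (A $ a $ b) \<le> T" for a b unfolding T_def by (rule psd_entry_bound[OF assms])
  have "Re (qf A v) \<le> cmod (qf A v)" by (rule complex_Re_le_cmod)
  also have "\<dots> \<le> (\<Sum>a\<in>UNIV. \<Sum>b\<in>UNIV. cmod (cnj (v $ a) * A $ a $ b * v $ b))"
    unfolding qf_def by (rule order_trans[OF norm_sum sum_mono[OF norm_sum]])
  also have "\<dots> \<le> (\<Sum>a\<in>UNIV. \<Sum>b\<in>UNIV. T * (x a * x b))"
  proof (intro sum_mono)
    fix a b
    have "cmod (cnj (v $ a) * A $ a $ b * v $ b) = x a * cmod (A $ a $ b) * x b"
      unfolding x_def by (simp add: norm_mult)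
    also have "\<dots> \<le> x a * T * x b"
      unfolding x_def by (intro mult_right_mono mult_left_mono T) simp_all
    finally show "cmod (cnj (v $ a) * A $ a $ b * v $ b) \<le> T * (x a * x b)" by (simp add: mult_ac)
  qed
  also have "\<dots> \<le> (\<Sum>a\<in>UNIV. \<Sum>b\<in>UNIV. T * (((x a)\<^sup>2 + (x b)\<^sup>2) / 2))"
  proof (intro sum_mono mult_left_mono)
    fix a b
    have "0 \<le> (x a - x b)\<^sup>2" by simp
    then show "x a * x b \<le> ((x a)\<^sup>2 + (x b)\<^sup>2) / 2" by (simp add: power2_eq_square algebra_simps)
    show "0 \<le> T" using T[of a a] norm_ge_zero order_trans by blast
  qed
  also have "\<dots> = T * ((\<Sum>a\<in>(UNIV::'n set). \<Sum>b\<in>(UNIV::'n set). (x a)\<^sup>2) + (\<Sum>a\<in>(UNIV::'n set). \<Sum>b\<in>(UNIV::'n set). (x b)\<^sup>2)) / 2"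
    by (simp add: sum_distrib_left sum.distrib add_divide_distrib sum_divide_distrib algebra_simps)
  also have "\<dots> = T * (real CARD('n) * (\<Sum>i\<in>UNIV. (x i)\<^sup>2))"
  proof -
    have e1: "(\<Sum>a\<in>(UNIV::'n set). \<Sum>b\<in>(UNIV::'n set). (x a)\<^sup>2) = real CARD('n) * (\<Sum>i\<in>UNIV. (x i)\<^sup>2)"
      by (simp add: sum_distrib_left)
    have e2: "(\<Sum>a\<in>(UNIV::'n set). \<Sum>b\<in>(UNIV::'n set). (x b)\<^sup>2) = real CARD('n) * (\<Sum>i\<in>UNIV. (x i)\<^sup>2)"
      by simp
    show ?thesis unfolding e1 e2 by simp
  qed
  finally show ?thesis unfolding T_def x_def by (simp add: mult_ac)
qed

lemma psd_dominate:
  fixes R :: "complex^'n::finite^'n"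
  assumes "psd R" "0 \<le> c" "c * real CARD('n) * (\<Sum>k\<in>UNIV. Re (R $ k $ k)) \<le> m"
  shows "psd (m *\<^sub>R mat 1 - c *\<^sub>R R)"
  unfolding psd_qf
proof (intro conjI allI)
  have "hermitian R" using assms(1) unfolding psd_def by blast
  then show "hermitian (m *\<^sub>R mat 1 - c *\<^sub>R R)"
    by (intro hermitian_diff hermitian_id hermitian_scaleR)
  fix v :: "complex^'n"
  define S where "S = (\<Sum>i\<in>UNIV. (cmod (v $ i))\<^sup>2)"
  have S: "0 \<le> S" unfolding S_def by (simp add: sum_nonneg)
  have "c * Re (qf R v) \<le> c * (real CARD('n) * (\<Sum>k\<in>UNIV. Re (R $ k $ k)) * S)"
    unfolding S_def by (rule mult_left_mono[OF psd_bound[OF assms(1)] assms(2)])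
  also have "\<dots> \<le> m * S"
    using mult_right_mono[OF assms(3) S] by (simp add: mult_ac)
  finally have "c * Re (qf R v) \<le> m * S" .
  moreover have "Re (qf (m *\<^sub>R mat 1 - c *\<^sub>R R) v) = m * S - c * Re (qf R v)"
    unfolding qf_diff qf_scaleR qf_id S_def by simp
  ultimately show "0 \<le> Re (qf (m *\<^sub>R mat 1 - c *\<^sub>R R) v)" by simp
qed

lemma rat_of_code_0: "rat_of_code 0 = 0"
  by (simp add: rat_of_code_def prod_decode_def prod_decode_aux.simps int_decode_def sum_decode_def Zero_rat_def)

lemma gauss_of_code_0: "gauss_of_code 0 = 0"
  by (simp add: gauss_of_code_def prod_decode_def prod_decode_aux.simps rat_of_code_0 complex_eq_iff)

lemma gauss_of_code_pe0: "gauss_of_code (prod_encode (c, 0)) = of_real (real_of_rat (rat_of_code c))"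
  by (simp add: gauss_of_code_def rat_of_code_0 complex_eq_iff)

lemma Re_gauss: "Re (gauss_of_code c) = real_of_rat (rat_of_code (fst (prod_decode c)))"
  by (simp add: gauss_of_code_def case_prod_beta)

lemma ex_ix: "\<exists>ix::'n::finite \<Rightarrow> nat. bij_betw ix UNIV {..<CARD('n)}"
  using ex_bij_betw_finite_nat[of "UNIV :: 'n set"] by (simp add: lessThan_atLeast0)

lemma computable_scalar:
  assumes "computable_rat_fun g"
  shows "computable_mat_fun (\<lambda>n s. real_of_rat (g n s) *\<^sub>R (mat 1 :: complex^'n::finite^'n))"
proof -
  obtain h0 where h0: "total_recursive h0" "\<And>n s. rat_of_code (h0 (prod_encode (n, code_str s))) = g n s"
    using assms unfolding computable_rat_fun_def by blast
  obtain ix :: "'n \<Rightarrow> nat" where ix: "bij_betw ix UNIV {..<CARD('n)}" using ex_ix by blast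
  then have inj: "inj ix" by (simp add: bij_betw_def)
  define H where "H x = (if fst (prod_decode (snd (prod_decode x))) = snd (prod_decode (snd (prod_decode x)))
     then prod_encode (h0 (fst (prod_decode x)), 0) else 0)" for x
  have "rec_fn 1 (\<lambda>xs. H (xs ! 0))"
    unfolding H_def
    by (intro rec_if_eq rec_fst_pd rec_snd_pd rec_pe rec_total[OF h0(1)] rec_const rec_proj) simp_all
  then have tr: "total_recursive H" by (rule total_rec_of)
  show ?thesis unfolding computable_mat_fun_def
  proof (intro exI conjI allI)
    show "bij_betw ix UNIV {..<CARD('n)}" by (rule ix)
    show "total_recursive H" by (rule tr)
    fix n s i j
    show "gauss_of_code (H (prod_encode (prod_encode (n, code_str s), prod_encode (ix i, ix j)))) =
          (real_of_rat (g n s) *\<^sub>R (mat 1 :: complex^'n^'n)) $ i $ j"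
    proof (cases "i = j")
      case True
      then show ?thesis unfolding smat mat1 by (simp add: H_def gauss_of_code_pe0 h0(2))
    next
      case False
      then have "ix i \<noteq> ix j" using inj by (meson injD)
      then show ?thesis using False by (simp add: H_def gauss_of_code_0 smat mat1)
    qed
  qed
qed

lemma scalar_lcsp:
  assumes "lower_computable_semimeasure m"
  shows "lower_computable_semi_POVM (\<lambda>s. m s *\<^sub>R (mat 1 :: complex^'n::finite^'n))"
proof -
  from assms have nn: "\<And>s. 0 \<le> m s" and sm: "m summable_on UNIV" and le1: "infsum m UNIV \<le> 1"
    unfolding lower_computable_semimeasure_def by auto
  from assms obtain g where g: "computable_rat_fun g" "\<And>s. (\<lambda>n. real_of_rat (g n s)) \<longlonglongrightarrow> m s"
    "\<And>n s. g n s \<le> g (Suc n) s"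
    unfolding lower_computable_semimeasure_def by blast
  have gle: "real_of_rat (g n s) \<le> m s" for n s
  proof (rule incseq_le)
    show "incseq (\<lambda>n. real_of_rat (g n s))"
      by (rule incseq_SucI) (simp add: g(3) of_rat_less_eq)
    show "(\<lambda>n. real_of_rat (g n s)) \<longlonglongrightarrow> m s" by (rule g(2))
  qed
  have semi: "semi_POVM (\<lambda>s. m s *\<^sub>R (mat 1 :: complex^'n::finite^'n))"
    unfolding semi_POVM_def loewner_le_def
  proof (intro conjI allI)
    fix s
    show "hermitian (m s *\<^sub>R (mat 1 :: complex^'n::finite^'n))" by (rule hermitian_id)
    show "psd (m s *\<^sub>R (mat 1 :: complex^'n::finite^'n) - 0)" using psd_id[OF nn[of s]] by simp
  next
    show "(\<lambda>s. m s *\<^sub>R (mat 1 :: complex^'n::finite^'n)) summable_on UNIV"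
      using sm by (rule summable_on_scaleR_left)
    have "infsum (\<lambda>s. m s *\<^sub>R (mat 1 :: complex^'n::finite^'n)) UNIV = infsum m UNIV *\<^sub>R mat 1"
      using sm by (rule infsum_scaleR_left)
    moreover have "mat 1 - infsum m UNIV *\<^sub>R (mat 1 :: complex^'n::finite^'n) = (1 - infsum m UNIV) *\<^sub>R mat 1"
      by (simp add: scaleR_diff_left)
    ultimately show "psd (mat 1 - infsum (\<lambda>s. m s *\<^sub>R (mat 1 :: complex^'n::finite^'n)) UNIV)"
      using psd_id[of "1 - infsum m UNIV"] le1 by simp
  qed
  show ?thesis unfolding lower_computable_semi_POVM_def
  proof (intro conjI exI[of _ "\<lambda>n s. real_of_rat (g n s) *\<^sub>R (mat 1 :: complex^'n::finite^'n)"] allI)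
    show "semi_POVM (\<lambda>s. m s *\<^sub>R (mat 1 :: complex^'n::finite^'n))" by (rule semi)
    show "computable_mat_fun (\<lambda>n s. real_of_rat (g n s) *\<^sub>R (mat 1 :: complex^'n::finite^'n))"
      by (rule computable_scalar[OF g(1)])
    fix n s
    show "real_of_rat (g n s) *\<^sub>R (mat 1 :: complex^'n::finite^'n) \<in> Her_Q"
      unfolding Her_Q_def using hermitian_id by (auto simp: smat mat1)
    show "loewner_le (real_of_rat (g n s) *\<^sub>R (mat 1 :: complex^'n::finite^'n)) (m s *\<^sub>R mat 1)"
      unfolding loewner_le_def scaleR_diff_left[symmetric]
      by (rule psd_id) (use gle[of n s] in simp)
  next
    fix s
    show "(\<lambda>n. real_of_rat (g n s) *\<^sub>R (mat 1 :: complex^'n::finite^'n)) \<longlonglongrightarrow> m s *\<^sub>R mat 1"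
      by (intro tendsto_scaleR g(2) tendsto_const)
  qed
qed

lemma bl_diag: "bounded_linear (\<lambda>A :: complex^'n::finite^'n. Re (A $ i $ i))"
proof -
  have "bounded_linear (\<lambda>A :: complex^'n^'n. A $ i)" by (rule bounded_linear_vec_nth)
  moreover have "bounded_linear (\<lambda>v :: complex^'n. v $ i)" by (rule bounded_linear_vec_nth)
  ultimately have "bounded_linear (\<lambda>A :: complex^'n^'n. A $ i $ i)"
    using bounded_linear_compose[of "\<lambda>v :: complex^'n. v $ i" "\<lambda>A :: complex^'n^'n. A $ i"] by simp
  then show ?thesis by (rule bounded_linear_compose[OF bounded_linear_Re])
qed

lemma diag_lcs:
  fixes R :: "bool list \<Rightarrow> complex^'n::finite^'n"
  assumes "lower_computable_semi_POVM R"
  shows "lower_computable_semimeasure (\<lambda>s. Re (R s $ i $ i))"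
proof -
  have semi: "semi_POVM R" using assms unfolding lower_computable_semi_POVM_def by blast
  then have psdR: "\<And>s. psd (R s)" and smR: "R summable_on UNIV" and leI: "psd (mat 1 - infsum R UNIV)"
    unfolding semi_POVM_def loewner_le_def by auto
  obtain f where f: "computable_mat_fun f" "\<And>s. (\<lambda>n. f n s) \<longlonglongrightarrow> R s"
    "\<And>n s. loewner_le (f n s) (R s)"
    using assms unfolding lower_computable_semi_POVM_def by blast
  obtain ix :: "'n \<Rightarrow> nat" and hR where hR: "total_recursive hR"
    "\<And>n s i j. gauss_of_code (hR (prod_encode (prod_encode (n, code_str s), prod_encode (ix i, ix j)))) = f n s $ i $ j"
    using f(1) unfolding computable_mat_fun_def by blast
  define r where "r s = Re (R s $ i $ i)" for s
  define a where "a k s = Re (f k s $ i $ i)" for k s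
  have a_le: "a k s \<le> r s" for k s
  proof -
    have "0 \<le> Re ((R s - f k s) $ i $ i)"
      using f(3)[of k s] unfolding loewner_le_def by (rule psd_diag)
    then show ?thesis unfolding a_def r_def by simp
  qed
  have a_lim: "(\<lambda>k. a k s) \<longlonglongrightarrow> r s" for s
    unfolding a_def r_def by (intro tendsto_intros f(2))
  define Kc where "Kc = prod_encode (ix i, ix i)"
  define D where "D k z = fst (prod_decode (hR (prod_encode (prod_encode (k, snd (prod_decode z)), Kc))))" for k z
  define G where "G n z = rec_nat (D 0 z) (\<lambda>n y. if rle_code y (D (Suc n) z) = 0 then D (Suc n) z else y) n" for n z
  have G0: "G 0 z = D 0 z" for z unfolding G_def by simp
  have GS: "G (Suc n) z = (if rle_code (G n z) (D (Suc n) z) = 0 then D (Suc n) z else G n z)" for n z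
    unfolding G_def by simp
  define Hf where "Hf z = G (fst (prod_decode z)) z" for z
  have recD: "rec_fn k A \<Longrightarrow> rec_fn k B \<Longrightarrow> rec_fn k (\<lambda>xs. D (A xs) (B xs))" for k A B
    unfolding D_def by (intro rec_fst_pd rec_total[OF hR(1)] rec_pe rec_snd_pd rec_const)
  have recG: "rec_fn 2 (\<lambda>xs. G (xs ! 0) (xs ! 1))"
  proof -
    have R2: "rec_fn (Suc 1) (\<lambda>xs. rec_nat ((\<lambda>ys. D 0 (ys ! 0)) (tl xs))
        (\<lambda>n y. (\<lambda>zs. if rle_code (zs ! 1) (D (Suc (zs ! 0)) (zs ! 2)) = 0 then D (Suc (zs ! 0)) (zs ! 2) else zs ! 1) (n # y # tl xs)) (hd xs))"
      by (rule rec_prec) (intro rec_if0 rec_rle recD rec_proj rec_const rec_Suc; simp)+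
    show ?thesis
      by (rule rec_fn_cong2[OF R2]) (auto simp: length_Suc_conv G_def numeral_2_eq_2 cong: if_cong)
  qed
  have "rec_fn 1 (\<lambda>xs. Hf (xs ! 0))"
    unfolding Hf_def by (rule rec_comp2[OF recG]) (intro rec_fst_pd rec_proj; simp)+
  then have trH: "total_recursive Hf" by (rule total_rec_of)
  define q where "q n s = rat_of_code (Hf (prod_encode (n, code_str s)))" for n s
  have q_eq: "q n s = rat_of_code (G n (prod_encode (n, code_str s)))" for n s
    unfolding q_def Hf_def by simp
  have D_eq: "real_of_rat (rat_of_code (D k (prod_encode (n, code_str s)))) = a k s" for k n s
    unfolding D_def a_def Kc_def by (simp add: Re_gauss[symmetric] hR(2))
  have G_mono: "rat_of_code (G n z) \<le> rat_of_code (G (Suc n) z)" for n z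
    unfolding GS using rle_code_correct[of "G n z" "D (Suc n) z"] by auto
  have G_ge: "a n s \<le> real_of_rat (rat_of_code (G n (prod_encode (m, code_str s))))" for n m s
  proof (cases n)
    case 0 then show ?thesis using D_eq by (simp add: G0)
  next
    case (Suc k)
    let ?z = "prod_encode (m, code_str s)"
    show ?thesis
    proof (cases "rle_code (G k ?z) (D (Suc k) ?z) = 0")
      case True then show ?thesis using Suc D_eq by (simp add: GS)
    next
      case False
      then have "rat_of_code (D (Suc k) ?z) < rat_of_code (G k ?z)"
        using rle_code_correct[of "G k ?z" "D (Suc k) ?z"] by auto
      then have "real_of_rat (rat_of_code (D (Suc k) ?z)) < real_of_rat (rat_of_code (G k ?z))"
        by (simp add: of_rat_less)
      then show ?thesis using Suc D_eq[of "Suc k" m s] False by (simp add: GS)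
    qed
  qed
  have G_le: "real_of_rat (rat_of_code (G n (prod_encode (m, code_str s)))) \<le> r s" for n m s
  proof (induction n)
    case 0 then show ?case using D_eq a_le by (simp add: G0)
  next
    case (Suc n) then show ?case using D_eq a_le by (simp add: GS)
  qed
  show ?thesis unfolding lower_computable_semimeasure_def
  proof (intro conjI allI exI[of _ q])
    fix s show "0 \<le> Re (R s $ i $ i)" using psdR by (rule psd_diag)
  next
    show sm: "(\<lambda>s. Re (R s $ i $ i)) summable_on UNIV"
      using summable_on_bounded_linear[OF bl_diag smR] .
    have "((\<lambda>s. Re (R s $ i $ i)) has_sum Re (infsum R UNIV $ i $ i)) UNIV"
      using has_sum_bounded_linear[OF bl_diag has_sum_infsum[OF smR]] .
    then have "infsum (\<lambda>s. Re (R s $ i $ i)) UNIV = Re (infsum R UNIV $ i $ i)" by (rule infsumI)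
    moreover have "0 \<le> Re ((mat 1 - infsum R UNIV) $ i $ i)" using leI by (rule psd_diag)
    ultimately show "infsum (\<lambda>s. Re (R s $ i $ i)) UNIV \<le> 1" by (simp add: mat1)
  next
    show "computable_rat_fun q" unfolding computable_rat_fun_def q_def using trH by blast
  next
    fix s
    have "(\<lambda>n. real_of_rat (q n s)) \<longlonglongrightarrow> r s"
    proof (rule tendsto_sandwich[OF _ _ a_lim tendsto_const])
      show "\<forall>\<^sub>F n in sequentially. a n s \<le> real_of_rat (q n s)" using G_ge by (simp add: q_eq)
      show "\<forall>\<^sub>F n in sequentially. real_of_rat (q n s) \<le> r s" using G_le by (simp add: q_eq)
    qed
    then show "(\<lambda>n. real_of_rat (q n s)) \<longlonglongrightarrow> Re (R s $ i $ i)" by (simp add: r_def)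
  next
    fix n s
    have indep: "G k (prod_encode (m, code_str s)) = G k (prod_encode (m', code_str s))" for k m m'
      unfolding G_def D_def by (simp cong: if_cong)
    show "q n s \<le> q (Suc n) s"
      unfolding q_eq using G_mono indep by metis
  qed
qed

theorem mainTheorem3:
  fixes m :: "bool list \<Rightarrow> real"
  assumes "universal_probability m"
  shows "universal_semi_POVM (\<lambda>s. m s *\<^sub>R (mat 1 :: complex^'n::finite^'n))"
proof -
  have lcs: "lower_computable_semimeasure m"
    and univ: "\<And>r. lower_computable_semimeasure r \<Longrightarrow> \<exists>c>0. \<forall>s. c * r s \<le> m s"
    using assms unfolding universal_probability_def by auto
  show ?thesis unfolding universal_semi_POVM_def
  proof (intro conjI allI impI)
    show "lower_computable_semi_POVM (\<lambda>s. m s *\<^sub>R (mat 1 :: complex^'n::finite^'n))"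
      by (rule scalar_lcsp[OF lcs])
    fix R :: "bool list \<Rightarrow> complex^'n^'n"
    assume R: "lower_computable_semi_POVM R"
    have psdR: "psd (R s)" for s
      using R unfolding lower_computable_semi_POVM_def semi_POVM_def loewner_le_def by auto
    have "\<forall>i. \<exists>c>0. \<forall>s. c * Re (R s $ i $ i) \<le> m s"
      using univ[OF diag_lcs[OF R]] by blast
    then obtain C where C: "\<And>i. C i > 0" "\<And>i s. C i * Re (R s $ i $ i) \<le> m s" by metis
    define d where "d = Min (range C)"
    have dpos: "0 < d" unfolding d_def using C(1) by (subst Min_gr_iff) auto
    have dle: "d \<le> C i" for i unfolding d_def by (rule Min_le) auto
    define N where "N = real CARD('n)"
    have Npos: "0 < N" unfolding N_def by simp
    define c where "c = d / N\<^sup>2"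
    have cpos: "0 < c" unfolding c_def using dpos Npos by simp
    show "\<exists>c>0. \<forall>s. loewner_le (c *\<^sub>R R s) (m s *\<^sub>R mat 1)"
    proof (intro exI[of _ c] conjI allI cpos)
      fix s
      have each: "d * Re (R s $ k $ k) \<le> m s" for k
      proof -
        have "d * Re (R s $ k $ k) \<le> C k * Re (R s $ k $ k)"
          by (rule mult_right_mono[OF dle psd_diag[OF psdR]])
        also have "\<dots> \<le> m s" by (rule C(2))
        finally show ?thesis .
      qed
      have "d * (\<Sum>k\<in>UNIV. Re (R s $ k $ k)) \<le> (\<Sum>k\<in>(UNIV::'n set). m s)"
        unfolding sum_distrib_left by (rule sum_mono) (rule each)
      also have "\<dots> = N * m s" unfolding N_def by simp
      finally have dT: "d * (\<Sum>k\<in>UNIV. Re (R s $ k $ k)) \<le> N * m s" .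
      have "c * N * (\<Sum>k\<in>UNIV. Re (R s $ k $ k)) = (d * (\<Sum>k\<in>UNIV. Re (R s $ k $ k))) / N"
        unfolding c_def using Npos by (simp add: power2_eq_square field_simps)
      also have "\<dots> \<le> m s" using dT Npos by (simp add: divide_le_eq mult.commute)
      finally have key: "c * real CARD('n) * (\<Sum>k\<in>UNIV. Re (R s $ k $ k)) \<le> m s" unfolding N_def .
      show "loewner_le (c *\<^sub>R R s) (m s *\<^sub>R mat 1)"
        unfolding loewner_le_def
        by (rule psd_dominate[OF psdR _ key]) (use cpos in simp)
    qed
  qed
qed

end
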